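(* Let $\pi^{(d)}$ be $\tau^{(d)}$ (with $d\ge6$) or $\sigma^{(d)}$ (with $d\ge8$). If $\beta\le d$ and $\beta\equiv 2\pmod 4$, then $v=\sum_{\alpha=1}^{\beta}(-1)^\alpha e_\alpha\in\{e_\alpha\}_{\alpha\in\mathcal{A}}^{\Omega^{(d)}}$.
   Context: Alphabet $\mathcal{A}=\{1,\dots,d\}$; $\tau^{(d)}$ has top row $1,2,\dots,d$ and bottom row $d,d-1,\dots,6,3,2,5,4,1$; $\sigma^{(d)}$ has top row $1,\dots,d$ and bottom row $d,d-1,\dots,8,3,2,7,6,5,4,1$ (rows list letters in order of $\pi_{\mathrm t}$, $\pi_{\mathrm b}$). $\Omega^{(d)}=\Omega_{\pi^{(d)}}$ where $(\Omega_\pi)_{\alpha\beta}=+1$ if $\pi_{\mathrm t}(\alpha)<\pi_{\mathrm t}(\beta)$ and $\pi_{\mathrm b}(\alpha)>\pi_{\mathrm b}(\beta)$, $-1$ if the reverse inequalities hold, $0$ otherwise; $\langle u,v\rangle=u\Omega^{(d)}v^{\intercal}$ on $\mathbb{Z}^{\mathcal{A}}$, with canonical basis $e_\alpha$. A set $X\subseteq\mathbb{Z}^{\mathcal{A}}$ is $\Omega^{(d)}$-closed if $X=-X$ and for all $v,w\in X$ with $\langle v,w\rangle=1$ one has $v+w,v-w\in X$; $Y^{\Omega^{(d)}}$ denotes the smallest $\Omega^{(d)}$-closed set containing $Y$. *)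

theory Defs
  imports Main
begin

text \<open>Alphabet A = {1..d}. A permutation is given by its two rows (lists of letters in
  the order of pi_t and pi_b). pi_t(a), pi_b(a) are positions of a in the rows.\<close>

type_synonym perm_rows = "nat list \<times> nat list"

definition pos :: "nat list \<Rightarrow> nat \<Rightarrow> nat" where
  "pos xs a = Suc (LEAST i. i < length xs \<and> xs ! i = a)"

definition tau_perm :: "nat \<Rightarrow> perm_rows" where
  "tau_perm d = ([1..<d+1], rev [6..<d+1] @ [3,2,5,4,1])"

definition sigma_perm :: "nat \<Rightarrow> perm_rows" where
  "sigma_perm d = ([1..<d+1], rev [8..<d+1] @ [3,2,7,6,5,4,1])"

definition Omega :: "perm_rows \<Rightarrow> nat \<Rightarrow> nat \<Rightarrow> int" where
  "Omega p a b =
     (if pos (fst p) a < pos (fst p) b \<and> pos (snd p) a > pos (snd p) b then 1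
      else if pos (fst p) a > pos (fst p) b \<and> pos (snd p) a < pos (snd p) b then -1
      else 0)"

definition ZA :: "nat \<Rightarrow> (nat \<Rightarrow> int) set" where
  "ZA d = {v. \<forall>i. i \<notin> {1..d} \<longrightarrow> v i = 0}"

definition evec :: "nat \<Rightarrow> nat \<Rightarrow> int" where
  "evec a = (\<lambda>i. if i = a then 1 else 0)"

definition form :: "nat \<Rightarrow> perm_rows \<Rightarrow> (nat \<Rightarrow> int) \<Rightarrow> (nat \<Rightarrow> int) \<Rightarrow> int" where
  "form d p u v = (\<Sum>a\<in>{1..d}. \<Sum>b\<in>{1..d}. u a * Omega p a b * v b)"

definition omega_closed :: "nat \<Rightarrow> perm_rows \<Rightarrow> (nat \<Rightarrow> int) set \<Rightarrow> bool" where
  "omega_closed d p X \<longleftrightarrow> X \<subseteq> ZA d \<and> (\<lambda>v i. - v i) ` X = X \<and>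
     (\<forall>v\<in>X. \<forall>w\<in>X. form d p v w = 1 \<longrightarrow> (\<lambda>i. v i + w i) \<in> X \<and> (\<lambda>i. v i - w i) \<in> X)"

definition omega_closure :: "nat \<Rightarrow> perm_rows \<Rightarrow> (nat \<Rightarrow> int) set \<Rightarrow> (nat \<Rightarrow> int) set" where
  "omega_closure d p Y = \<Inter>{X. Y \<subseteq> X \<and> omega_closed d p X}"

end

theory Submission imports Defs begin

definition V :: "nat \<Rightarrow> nat \<Rightarrow> int" where
  "V \<beta> = (\<lambda>i. \<Sum>a\<in>{1..\<beta>}. (-1) ^ a * evec a i)"

lemma V_apply: "V \<beta> i = (if 1 \<le> i \<and> i \<le> \<beta> then (-1) ^ i else 0)"
  unfolding V_def evec_def by (simp add: if_distrib cong: if_cong)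

lemma form_add_left: "form d p (\<lambda>i. u i + w i) z = form d p u z + form d p w z"
  unfolding form_def by (simp add: algebra_simps sum.distrib)
lemma form_diff_left: "form d p (\<lambda>i. u i - w i) z = form d p u z - form d p w z"
  unfolding form_def by (simp add: algebra_simps sum_subtractf)
lemma form_neg_left: "form d p (\<lambda>i. - u i) z = - form d p u z"
  unfolding form_def by (simp add: sum_negf)
lemma form_add_right: "form d p z (\<lambda>i. u i + w i) = form d p z u + form d p z w"
  unfolding form_def by (simp add: algebra_simps sum.distrib)
lemma form_diff_right: "form d p z (\<lambda>i. u i - w i) = form d p z u - form d p z w"
  unfolding form_def by (simp add: algebra_simps sum_subtractf)
lemma form_neg_right: "form d p z (\<lambda>i. - u i) = - form d p z u"
  unfolding form_def by (simp add: sum_negf)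

lemma form_evec_right: "b \<in> {1..d} \<Longrightarrow> form d p u (evec b) = (\<Sum>a\<in>{1..d}. u a * Omega p a b)"
  unfolding form_def evec_def by (simp add: if_distrib cong: if_cong)

lemma form_evec_evec: assumes "a \<in> {1..d}" "b \<in> {1..d}"
  shows "form d p (evec a) (evec b) = Omega p a b"
proof -
  have "(\<Sum>aa\<in>{1..d}. evec a aa * Omega p aa b) = (\<Sum>aa\<in>{1..d}. if aa = a then Omega p a b else 0)"
    by (rule sum.cong) (auto simp: evec_def)
  thus ?thesis using assms by (simp add: form_evec_right)
qed

lemma form_V_evec: assumes "\<beta> \<le> d" "c \<in> {1..d}"
  shows "form d p (V \<beta>) (evec c) = (\<Sum>a\<in>{1..\<beta>}. (-1) ^ a * Omega p a c)"
proof -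
  have "form d p (V \<beta>) (evec c) = (\<Sum>a\<in>{1..d}. (if a \<le> \<beta> then (-1) ^ a * Omega p a c else 0))"
    using assms by (simp add: form_evec_right V_apply) (rule sum.cong, auto)
  also have "\<dots> = (\<Sum>a\<in>{x\<in>{1..d}. x \<le> \<beta>}. (-1) ^ a * Omega p a c)"
    by (rule sum.inter_filter[symmetric]) simp
  also have "{x\<in>{1..d}. x \<le> \<beta>} = {1..\<beta>}" using assms by auto
  finally show ?thesis .
qed

lemma Omega_antisym: "Omega p a b = - Omega p b a"
  unfolding Omega_def by auto

lemma form_antisym: "form d p u w = - form d p w u"
  unfolding form_def
  apply (subst sum.swap)
  apply (simp add: sum_negf[symmetric])
  apply (rule sum.cong, simp)+
  apply (subst Omega_antisym, simp)
  done

lemma cl_neg: "omega_closed d p X \<Longrightarrow> x \<in> X \<Longrightarrow> (\<lambda>i. - x i) \<in> X"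
  unfolding omega_closed_def by (metis image_eqI)

lemma cl_add: assumes "omega_closed d p X" "x \<in> X" "r \<in> X" "form d p x r = 1 \<or> form d p x r = -1"
  shows "(\<lambda>i. x i + r i) \<in> X"
proof (cases "form d p x r = 1")
  case True thus ?thesis using assms unfolding omega_closed_def by blast
next
  case False
  hence "form d p r x = 1" using assms(4) form_antisym[of d p r x] by auto
  hence "(\<lambda>i. r i + x i) \<in> X" using assms unfolding omega_closed_def by blast
  thus ?thesis by (simp add: add.commute)
qed

lemma cl_sub: assumes "omega_closed d p X" "x \<in> X" "r \<in> X" "form d p x r = 1 \<or> form d p x r = -1"
  shows "(\<lambda>i. x i - r i) \<in> X"
proof -
  have "(\<lambda>i. - r i) \<in> X" using cl_neg assms by blast
  moreover have "form d p x (\<lambda>i. - r i) = 1 \<or> form d p x (\<lambda>i. - r i) = -1"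
    using assms(4) by (auto simp: form_neg_right)
  ultimately have "(\<lambda>i. x i + - r i) \<in> X" using cl_add[OF assms(1,2)] by blast
  thus ?thesis by simp
qed

lemma pos_nth: assumes "distinct xs" "i < length xs" shows "pos xs (xs ! i) = Suc i"
  unfolding pos_def
  by (rule arg_cong[where f=Suc], rule Least_equality)
     (use assms nth_eq_iff_index_eq in \<open>auto simp: not_less\<close>)

lemma pos_top: "1 \<le> a \<Longrightarrow> a \<le> d \<Longrightarrow> pos [1..<d+1] a = a"
  using pos_nth[of "[1..<d+1]" "a - 1"] by (simp del: upt_Suc)

definition rbt :: "nat \<Rightarrow> nat \<Rightarrow> nat" where
  "rbt d a = (if 6 \<le> a then d + 1 - a else if a = 3 then d - 4 else if a = 2 then d - 3
     else if a = 5 then d - 2 else if a = 4 then d - 1 else d)"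

lemma pos_bot_t: assumes "6 \<le> d" "1 \<le> a" "a \<le> d"
  shows "pos (rev [6..<d+1] @ [3,2,5,4,1]) a = rbt d a"
proof -
  let ?L = "rev [6..<d+1] @ [3,2,5,4,1]"
  have dl: "distinct ?L" by (auto simp del: upt_Suc)
  have tl: "\<And>j. ?L ! (d - 5 + j) = [3,2,5,4,1] ! j"
  proof -
    fix j
    have "d - 5 = length (rev [6..<d+1])" using assms by (simp del: upt_Suc)
    thus "?L ! (d - 5 + j) = [3,2,5,4,1] ! j" by (metis nth_append_length_plus)
  qed
  show ?thesis
  proof (cases "6 \<le> a")
    case True
    have "?L ! (d - a) = a" using True assms by (simp del: upt_Suc add: nth_append rev_nth)
    thus ?thesis using pos_nth[OF dl, of "d - a"] True assms by (simp add: rbt_def)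
  next
    case False
    hence "a = 1 \<or> a = 2 \<or> a = 3 \<or> a = 4 \<or> a = 5" using assms by auto
    thus ?thesis
    proof (elim disjE)
      assume a: "a = 1"
      have e: "d - 1 = d - 5 + 4" using assms by arith
      have "?L ! (d - 1) = a" unfolding e tl using a by simp
      thus ?thesis using pos_nth[OF dl, of "d - 1"] a assms by (simp add: rbt_def)
    next
      assume a: "a = 2"
      have e: "d - 4 = d - 5 + 1" using assms by arith
      have "?L ! (d - 4) = a" unfolding e tl using a by simp
      thus ?thesis using pos_nth[OF dl, of "d - 4"] a assms by (simp add: rbt_def)
    next
      assume a: "a = 3"
      have "?L ! (d - 5) = a" using tl[of 0] a by simp
      thus ?thesis using pos_nth[OF dl, of "d - 5"] a assms by (simp add: rbt_def)
    next
      assume a: "a = 4"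
      have e: "d - 2 = d - 5 + 3" using assms by arith
      have "?L ! (d - 2) = a" unfolding e tl using a by simp
      thus ?thesis using pos_nth[OF dl, of "d - 2"] a assms by (simp add: rbt_def)
    next
      assume a: "a = 5"
      have e: "d - 3 = d - 5 + 2" using assms by arith
      have "?L ! (d - 3) = a" unfolding e tl using a by simp
      thus ?thesis using pos_nth[OF dl, of "d - 3"] a assms by (simp add: rbt_def)
    qed
  qed
qed

lemma Omega_t: assumes "6 \<le> d" "a \<in> {1..d}" "b \<in> {1..d}"
  shows "Omega (tau_perm d) a b = (if a < b \<and> rbt d b < rbt d a then 1
     else if b < a \<and> rbt d a < rbt d b then -1 else 0)"
proof -
  have "pos (fst (tau_perm d)) a = a" "pos (fst (tau_perm d)) b = b"
    "pos (snd (tau_perm d)) a = rbt d a" "pos (snd (tau_perm d)) b = rbt d b"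
    using assms pos_top[of a d] pos_top[of b d] pos_bot_t[of d a] pos_bot_t[of d b]
    unfolding tau_perm_def fst_conv snd_conv by auto
  thus ?thesis unfolding Omega_def by simp
qed


lemma alt0: "even m \<Longrightarrow> (\<Sum>a\<in>{1..m}. (-1::int)^a) = 0"
proof -
  assume "even m"
  then obtain k where m: "m = 2 * k" by blast
  have "(\<Sum>a\<in>{1..2*k}. (-1::int)^a) = 0"
    by (induct k) (simp_all add: sum.cl_ivl_Suc)
  thus ?thesis using m by simp
qed

lemma sum_split1: "m \<le> n \<Longrightarrow> (\<Sum>a\<in>{1..n}. f a) = (\<Sum>a\<in>{1..m}. f a) + (\<Sum>a\<in>{Suc m..n}. f a)"
proof -
  assume "m \<le> n"
  hence "{1..n} = {1..m} \<union> {Suc m..n}" by auto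
  thus ?thesis by (simp add: sum.union_disjoint)
qed

lemma G1_t: assumes "even \<beta>" "\<beta> < c" "c \<le> d" "6 \<le> c" "6 \<le> d"
  shows "(\<Sum>a\<in>{1..\<beta>}. (-1)^a * Omega (tau_perm d) a c) = 0"
proof -
  have "(\<Sum>a\<in>{1..\<beta>}. (-1)^a * Omega (tau_perm d) a c) = (\<Sum>a\<in>{1..\<beta>}. (-1)^a)"
    by (rule sum.cong) (use assms in \<open>auto simp: Omega_t rbt_def\<close>)
  thus ?thesis using alt0 assms by simp
qed

lemma five: "{1..5::nat} = {1,2,3,4,5}" by auto
lemma sum5: "(\<Sum>a\<in>{1..5::nat}. f a) = f 1 + f 2 + f 3 + f 4 + (f 5 :: int)"
  unfolding five by simp

lemma G2_t: assumes "even \<beta>" "6 \<le> \<beta>" "\<beta> \<le> d" "c \<in> {2,3,5}"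
  shows "(\<Sum>a\<in>{1..\<beta>}. (-1)^a * Omega (tau_perm d) a c) = -1"
proof -
  let ?g = "\<lambda>a. (-1)^a * Omega (tau_perm d) a c"
  have s1: "(\<Sum>a\<in>{1..5}. ?g a) = 0" unfolding sum5 using assms by (auto simp: Omega_t rbt_def)
  have "(\<Sum>a\<in>{6..\<beta>}. ?g a) = (\<Sum>a\<in>{6..\<beta>}. - ((-1)^a))"
    by (rule sum.cong) (use assms in \<open>auto simp: Omega_t rbt_def\<close>)
  also have "\<dots> = - (\<Sum>a\<in>{6..\<beta>}. (-1)^a)" by (simp add: sum_negf)
  also have "(\<Sum>a\<in>{6..\<beta>}. (-1::int)^a) = 1"
  proof -
    have a5: "(\<Sum>a\<in>{1..5}. (-1::int)^a) = -1" unfolding sum5 by simp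
    have "(\<Sum>a\<in>{1..\<beta>}. (-1::int)^a) = (\<Sum>a\<in>{1..5}. (-1)^a) + (\<Sum>a\<in>{6..\<beta>}. (-1)^a)"
      using sum_split1[of 5 \<beta> "\<lambda>a. (-1::int)^a"] assms by (simp add: numeral_eq_Suc)
    thus ?thesis using a5 alt0[OF assms(1)] by linarith
  qed
  finally have s2: "(\<Sum>a\<in>{6..\<beta>}. ?g a) = -1" .
  show ?thesis using sum_split1[of 5 \<beta> ?g] s1 s2 assms by simp
qed


lemmas formsimps = form_add_left form_diff_left form_neg_left form_add_right form_diff_right form_neg_right

lemma cl_root: assumes "omega_closed d p X" "evec a \<in> X" "evec b \<in> X" "a \<in> {1..d}" "b \<in> {1..d}"
  "Omega p a b = 1 \<or> Omega p a b = -1"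
  shows "(\<lambda>i. evec a i + evec b i) \<in> X"
  using cl_add[OF assms(1-3)] assms(4-6) form_evec_evec by metis

lemma step_t:
  assumes cl: "omega_closed d (tau_perm d) X" and ev: "\<And>a. a \<in> {1..d} \<Longrightarrow> evec a \<in> X"
    and d6: "6 \<le> d" and eb: "even \<beta>" and b6: "6 \<le> \<beta>" and bd: "\<beta> + 4 \<le> d"
    and V: "V \<beta> \<in> X"
  shows "V (\<beta> + 4) \<in> X"
proof -
  let ?p = "tau_perm d"
  have Fc: "form d ?p (V \<beta>) (evec c) = -1" if "c \<in> {2,3,5}" for c
    using that form_V_evec[of \<beta> d c ?p] G2_t[OF eb b6, of d c] bd b6 by auto
  have Fh: "form d ?p (V \<beta>) (evec c) = 0" if "\<beta> < c" "c \<le> d" for c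
    using that form_V_evec[of \<beta> d c ?p] G1_t[OF eb, of c d] bd b6 by auto
  have FE: "form d ?p (evec a) (evec b) = Omega ?p a b" if "a \<in> {1..d}" "b \<in> {1..d}" for a b
    using that form_evec_evec by blast
  have Om: "Omega ?p a b = (if a < b \<and> rbt d b < rbt d a then 1
     else if b < a \<and> rbt d a < rbt d b then -1 else 0)" if "a \<in> {1..d}" "b \<in> {1..d}" for a b
    using Omega_t[OF d6 that] .
  note S = formsimps Fc Fh FE Om rbt_def
  have e2: "evec 2 \<in> X" and e3: "evec 3 \<in> X" and e5: "evec 5 \<in> X"
    using ev d6 by auto
  have eh: "evec (\<beta> + j) \<in> X" if "j \<in> {1..4}" for j using ev that bd by auto
  have r2: "(\<lambda>i. evec 2 i + evec (\<beta>+1) i) \<in> X"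
    by (rule cl_root[OF cl e2 eh]) (use bd b6 in \<open>auto simp: Om rbt_def\<close>)
  have r3: "(\<lambda>i. evec 5 i + evec (\<beta>+2) i) \<in> X"
    by (rule cl_root[OF cl e5 eh]) (use bd b6 in \<open>auto simp: Om rbt_def\<close>)
  have r4: "(\<lambda>i. evec 2 i + evec (\<beta>+4) i) \<in> X"
    by (rule cl_root[OF cl e2 eh]) (use bd b6 in \<open>auto simp: Om rbt_def\<close>)
  have r5: "(\<lambda>i. evec 3 i + evec (\<beta>+3) i) \<in> X"
    by (rule cl_root[OF cl e3 eh]) (use bd b6 in \<open>auto simp: Om rbt_def\<close>)
  have x1: "(\<lambda>i. V \<beta> i + evec 3 i) \<in> X"
    by (rule cl_add[OF cl V e3]) (insert bd b6, simp add: S, arith?)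
  have x2: "(\<lambda>i. (V \<beta> i + evec 3 i) - (evec 2 i + evec (\<beta>+1) i)) \<in> X"
    by (rule cl_sub[OF cl x1 r2]) (insert bd b6, simp add: S, arith?)
  have x3: "(\<lambda>i. ((V \<beta> i + evec 3 i) - (evec 2 i + evec (\<beta>+1) i)) + (evec 5 i + evec (\<beta>+2) i)) \<in> X"
    by (rule cl_add[OF cl x2 r3]) (insert bd b6, simp add: S, arith?)
  have x4: "(\<lambda>i. (((V \<beta> i + evec 3 i) - (evec 2 i + evec (\<beta>+1) i)) + (evec 5 i + evec (\<beta>+2) i))
     + (evec 2 i + evec (\<beta>+4) i)) \<in> X"
    by (rule cl_add[OF cl x3 r4]) (insert bd b6, simp add: S, arith?)
  have x5: "(\<lambda>i. ((((V \<beta> i + evec 3 i) - (evec 2 i + evec (\<beta>+1) i)) + (evec 5 i + evec (\<beta>+2) i))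
     + (evec 2 i + evec (\<beta>+4) i)) - (evec 3 i + evec (\<beta>+3) i)) \<in> X"
    by (rule cl_sub[OF cl x4 r5]) (insert bd b6, simp add: S, arith?)
  have x6: "(\<lambda>i. (((((V \<beta> i + evec 3 i) - (evec 2 i + evec (\<beta>+1) i)) + (evec 5 i + evec (\<beta>+2) i))
     + (evec 2 i + evec (\<beta>+4) i)) - (evec 3 i + evec (\<beta>+3) i)) - evec 5 i) \<in> X"
    by (rule cl_sub[OF cl x5 e5]) (insert bd b6, simp add: S, arith?)
  have pb: "(-1::int) ^ \<beta> = 1" using eb by simp
  have "(\<lambda>i. (((((V \<beta> i + evec 3 i) - (evec 2 i + evec (\<beta>+1) i)) + (evec 5 i + evec (\<beta>+2) i))
     + (evec 2 i + evec (\<beta>+4) i)) - (evec 3 i + evec (\<beta>+3) i)) - evec 5 i) = V (\<beta> + 4)"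
    using b6 pb by (auto simp: V_apply evec_def fun_eq_iff power_add)
  thus ?thesis using x6 by simp
qed


definition rbs :: "nat \<Rightarrow> nat \<Rightarrow> nat" where
  "rbs d a = (if 8 \<le> a then d + 1 - a else if a = 3 then d - 6 else if a = 2 then d - 5
     else if a = 7 then d - 4 else if a = 6 then d - 3
     else if a = 5 then d - 2 else if a = 4 then d - 1 else d)"

lemma pos_bot_s: assumes "8 \<le> d" "1 \<le> a" "a \<le> d"
  shows "pos (rev [8..<d+1] @ [3,2,7,6,5,4,1]) a = rbs d a"
proof -
  let ?L = "rev [8..<d+1] @ [3,2,7,6,5,4,1]"
  have dl: "distinct ?L" by (auto simp del: upt_Suc)
  have tl: "\<And>j. ?L ! (d - 7 + j) = [3,2,7,6,5,4,1] ! j"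
  proof -
    fix j
    have "d - 7 = length (rev [8..<d+1])" using assms by (simp del: upt_Suc)
    thus "?L ! (d - 7 + j) = [3,2,7,6,5,4,1] ! j" by (metis nth_append_length_plus)
  qed
  show ?thesis
  proof (cases "8 \<le> a")
    case True
    have "?L ! (d - a) = a" using True assms by (simp del: upt_Suc add: nth_append rev_nth)
    thus ?thesis using pos_nth[OF dl, of "d - a"] True assms by (simp add: rbs_def)
  next
    case False
    hence "a = 1 \<or> a = 2 \<or> a = 3 \<or> a = 4 \<or> a = 5 \<or> a = 6 \<or> a = 7" using assms by auto
    thus ?thesis
    proof (elim disjE)
      assume a: "a = 1"
      have e: "d - 1 = d - 7 + 6" using assms by arith
      have "?L ! (d - 1) = a" unfolding e tl using a by simp
      thus ?thesis using pos_nth[OF dl, of "d - 1"] a assms by (simp add: rbs_def)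
    next
      assume a: "a = 2"
      have e: "d - 6 = d - 7 + 1" using assms by arith
      have "?L ! (d - 6) = a" unfolding e tl using a by simp
      thus ?thesis using pos_nth[OF dl, of "d - 6"] a assms by (simp add: rbs_def)
    next
      assume a: "a = 3"
      have "?L ! (d - 7) = a" using tl[of 0] a by simp
      thus ?thesis using pos_nth[OF dl, of "d - 7"] a assms by (simp add: rbs_def)
    next
      assume a: "a = 4"
      have e: "d - 2 = d - 7 + 5" using assms by arith
      have "?L ! (d - 2) = a" unfolding e tl using a by simp
      thus ?thesis using pos_nth[OF dl, of "d - 2"] a assms by (simp add: rbs_def)
    next
      assume a: "a = 5"
      have e: "d - 3 = d - 7 + 4" using assms by arith
      have "?L ! (d - 3) = a" unfolding e tl using a by simp
      thus ?thesis using pos_nth[OF dl, of "d - 3"] a assms by (simp add: rbs_def)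
    next
      assume a: "a = 6"
      have e: "d - 4 = d - 7 + 3" using assms by arith
      have "?L ! (d - 4) = a" unfolding e tl using a by simp
      thus ?thesis using pos_nth[OF dl, of "d - 4"] a assms by (simp add: rbs_def)
    next
      assume a: "a = 7"
      have e: "d - 5 = d - 7 + 2" using assms by arith
      have "?L ! (d - 5) = a" unfolding e tl using a by simp
      thus ?thesis using pos_nth[OF dl, of "d - 5"] a assms by (simp add: rbs_def)
    qed
  qed
qed

lemma Omega_s: assumes "8 \<le> d" "a \<in> {1..d}" "b \<in> {1..d}"
  shows "Omega (sigma_perm d) a b = (if a < b \<and> rbs d b < rbs d a then 1
     else if b < a \<and> rbs d a < rbs d b then -1 else 0)"
proof -
  have "pos (fst (sigma_perm d)) a = a" "pos (fst (sigma_perm d)) b = b"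
    "pos (snd (sigma_perm d)) a = rbs d a" "pos (snd (sigma_perm d)) b = rbs d b"
    using assms pos_top[of a d] pos_top[of b d] pos_bot_s[of d a] pos_bot_s[of d b]
    unfolding sigma_perm_def fst_conv snd_conv by auto
  thus ?thesis unfolding Omega_def by simp
qed




lemma seven: "{1..7::nat} = {1,2,3,4,5,6,7}" by auto
lemma sum7: "(\<Sum>a\<in>{1..7::nat}. f a) = f 1 + f 2 + f 3 + f 4 + f 5 + f 6 + (f 7 :: int)"
  unfolding seven by simp

lemma G1_s: assumes "even \<beta>" "\<beta> < c" "c \<le> d" "8 \<le> c" "8 \<le> d"
  shows "(\<Sum>a\<in>{1..\<beta>}. (-1)^a * Omega (sigma_perm d) a c) = 0"
proof -
  have "(\<Sum>a\<in>{1..\<beta>}. (-1)^a * Omega (sigma_perm d) a c) = (\<Sum>a\<in>{1..\<beta>}. (-1)^a)"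
    by (rule sum.cong) (use assms in \<open>auto simp: Omega_s rbs_def\<close>)
  thus ?thesis using alt0 assms by simp
qed

lemma G2_s: assumes "even \<beta>" "10 \<le> \<beta>" "\<beta> \<le> d" "c \<in> {2,3,5}"
  shows "(\<Sum>a\<in>{1..\<beta>}. (-1)^a * Omega (sigma_perm d) a c) = -1"
proof -
  let ?g = "\<lambda>a. (-1)^a * Omega (sigma_perm d) a c"
  have s1: "(\<Sum>a\<in>{1..7}. ?g a) = 0" unfolding sum7 using assms by (auto simp: Omega_s rbs_def) (arith+)
  have "(\<Sum>a\<in>{8..\<beta>}. ?g a) = (\<Sum>a\<in>{8..\<beta>}. - ((-1)^a))"
    by (rule sum.cong) (use assms in \<open>auto simp: Omega_s rbs_def\<close>)
  also have "\<dots> = - (\<Sum>a\<in>{8..\<beta>}. (-1)^a)" by (simp add: sum_negf)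
  also have "(\<Sum>a\<in>{8..\<beta>}. (-1::int)^a) = 1"
  proof -
    have a7: "(\<Sum>a\<in>{1..7}. (-1::int)^a) = -1" unfolding sum7 by simp
    have "(\<Sum>a\<in>{1..\<beta>}. (-1::int)^a) = (\<Sum>a\<in>{1..7}. (-1)^a) + (\<Sum>a\<in>{8..\<beta>}. (-1)^a)"
      using sum_split1[of 7 \<beta> "\<lambda>a. (-1::int)^a"] assms by (simp add: numeral_eq_Suc)
    thus ?thesis using a7 alt0[OF assms(1)] by linarith
  qed
  finally have s2: "(\<Sum>a\<in>{8..\<beta>}. ?g a) = -1" .
  show ?thesis using sum_split1[of 7 \<beta> ?g] s1 s2 assms by simp
qed


lemma step_s:
  assumes cl: "omega_closed d (sigma_perm d) X" and ev: "\<And>a. a \<in> {1..d} \<Longrightarrow> evec a \<in> X"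
    and d8: "8 \<le> d" and eb: "even \<beta>" and b10: "10 \<le> \<beta>" and bd: "\<beta> + 4 \<le> d"
    and V: "V \<beta> \<in> X"
  shows "V (\<beta> + 4) \<in> X"
proof -
  let ?p = "sigma_perm d"
  have Fc: "form d ?p (V \<beta>) (evec c) = -1" if "c \<in> {2,3,5}" for c
    using that form_V_evec[of \<beta> d c ?p] G2_s[OF eb b10, of d c] bd b10 by auto
  have Fh: "form d ?p (V \<beta>) (evec c) = 0" if "\<beta> < c" "c \<le> d" for c
    using that form_V_evec[of \<beta> d c ?p] G1_s[OF eb, of c d] bd b10 by auto
  have FE: "form d ?p (evec a) (evec b) = Omega ?p a b" if "a \<in> {1..d}" "b \<in> {1..d}" for a b
    using that form_evec_evec by blast
  have Om: "Omega ?p a b = (if a < b \<and> rbs d b < rbs d a then 1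
     else if b < a \<and> rbs d a < rbs d b then -1 else 0)" if "a \<in> {1..d}" "b \<in> {1..d}" for a b
    using Omega_s[OF d8 that] .
  note S = formsimps Fc Fh FE Om rbs_def
  have e2: "evec 2 \<in> X" and e3: "evec 3 \<in> X" and e5: "evec 5 \<in> X"
    using ev d8 by auto
  have eh: "evec (\<beta> + j) \<in> X" if "j \<in> {1..4}" for j using ev that bd by auto
  have r2: "(\<lambda>i. evec 2 i + evec (\<beta>+1) i) \<in> X"
    by (rule cl_root[OF cl e2 eh]) (use bd b10 in \<open>auto simp: Om rbs_def\<close>)
  have r3: "(\<lambda>i. evec 5 i + evec (\<beta>+2) i) \<in> X"
    by (rule cl_root[OF cl e5 eh]) (use bd b10 in \<open>auto simp: Om rbs_def\<close>)
  have r4: "(\<lambda>i. evec 2 i + evec (\<beta>+4) i) \<in> X"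
    by (rule cl_root[OF cl e2 eh]) (use bd b10 in \<open>auto simp: Om rbs_def\<close>)
  have r5: "(\<lambda>i. evec 3 i + evec (\<beta>+3) i) \<in> X"
    by (rule cl_root[OF cl e3 eh]) (use bd b10 in \<open>auto simp: Om rbs_def\<close>)
  have x1: "(\<lambda>i. V \<beta> i + evec 3 i) \<in> X"
    by (rule cl_add[OF cl V e3]) (insert bd b10, simp add: S, arith?)
  have x2: "(\<lambda>i. (V \<beta> i + evec 3 i) - (evec 2 i + evec (\<beta>+1) i)) \<in> X"
    by (rule cl_sub[OF cl x1 r2]) (insert bd b10, simp add: S, arith?)
  have x3: "(\<lambda>i. ((V \<beta> i + evec 3 i) - (evec 2 i + evec (\<beta>+1) i)) + (evec 5 i + evec (\<beta>+2) i)) \<in> X"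
    by (rule cl_add[OF cl x2 r3]) (insert bd b10, simp add: S, arith?)
  have x4: "(\<lambda>i. (((V \<beta> i + evec 3 i) - (evec 2 i + evec (\<beta>+1) i)) + (evec 5 i + evec (\<beta>+2) i))
     + (evec 2 i + evec (\<beta>+4) i)) \<in> X"
    by (rule cl_add[OF cl x3 r4]) (insert bd b10, simp add: S, arith?)
  have x5: "(\<lambda>i. ((((V \<beta> i + evec 3 i) - (evec 2 i + evec (\<beta>+1) i)) + (evec 5 i + evec (\<beta>+2) i))
     + (evec 2 i + evec (\<beta>+4) i)) - (evec 3 i + evec (\<beta>+3) i)) \<in> X"
    by (rule cl_sub[OF cl x4 r5]) (insert bd b10, simp add: S, arith?)
  have x6: "(\<lambda>i. (((((V \<beta> i + evec 3 i) - (evec 2 i + evec (\<beta>+1) i)) + (evec 5 i + evec (\<beta>+2) i))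
     + (evec 2 i + evec (\<beta>+4) i)) - (evec 3 i + evec (\<beta>+3) i)) - evec 5 i) \<in> X"
    by (rule cl_sub[OF cl x5 e5]) (insert bd b10, simp add: S, arith?)
  have pb: "(-1::int) ^ \<beta> = 1" using eb by simp
  have "(\<lambda>i. (((((V \<beta> i + evec 3 i) - (evec 2 i + evec (\<beta>+1) i)) + (evec 5 i + evec (\<beta>+2) i))
     + (evec 2 i + evec (\<beta>+4) i)) - (evec 3 i + evec (\<beta>+3) i)) - evec 5 i) = V (\<beta> + 4)"
    using b10 pb by (auto simp: V_apply evec_def fun_eq_iff power_add)
  thus ?thesis using x6 by simp
qed



lemma FV2: assumes "2 \<le> d" "c \<in> {1..d}"
  shows "form d p (V 2) (evec c) = Omega p 2 c - Omega p 1 c"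
proof -
  have "{1..2::nat} = {1,2}" by auto
  thus ?thesis using form_V_evec[of 2 d c p] assms by simp
qed

lemma FV6: assumes "6 \<le> d" "c \<in> {1..d}"
  shows "form d p (V 6) (evec c) = Omega p 2 c - Omega p 1 c + Omega p 4 c - Omega p 3 c
     + Omega p 6 c - Omega p 5 c"
proof -
  have "{1..6::nat} = {1,2,3,4,5,6}" by auto
  thus ?thesis using form_V_evec[of 6 d c p] assms by simp
qed

lemma base2: assumes cl: "omega_closed d p X" and ev: "\<And>a. a \<in> {1..d} \<Longrightarrow> evec a \<in> X"
  and d2: "2 \<le> d" and om: "Omega p 2 1 = 1 \<or> Omega p 2 1 = -1"
  shows "V 2 \<in> X"
proof -
  have "(\<lambda>i. evec 2 i - evec 1 i) \<in> X"
    by (rule cl_sub[OF cl]) (use ev d2 om form_evec_evec[of 2 d 1 p] in auto)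
  moreover have "(\<lambda>i. evec 2 i - evec 1 i) = V 2"
    by (auto simp: V_apply evec_def fun_eq_iff)
  ultimately show ?thesis by simp
qed

lemma t26:
  assumes cl: "omega_closed d (tau_perm d) X" and ev: "\<And>a. a \<in> {1..d} \<Longrightarrow> evec a \<in> X"
    and d6: "6 \<le> d" and V: "V 2 \<in> X"
  shows "V 6 \<in> X"
proof -
  let ?p = "tau_perm d"
  have FE: "form d ?p (evec a) (evec b) = Omega ?p a b" if "a \<in> {1..d}" "b \<in> {1..d}" for a b
    using that form_evec_evec by blast
  have Om: "Omega ?p a b = (if a < b \<and> rbt d b < rbt d a then 1
     else if b < a \<and> rbt d a < rbt d b then -1 else 0)" if "a \<in> {1..d}" "b \<in> {1..d}" for a b
    using Omega_t[OF d6 that] .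
  have FV: "form d ?p (V 2) (evec c) = Omega ?p 2 c - Omega ?p 1 c" if "c \<in> {1..d}" for c
    using FV2[of d c] that d6 by simp
  note S = formsimps FV FE Om rbt_def
  have e: "evec a \<in> X" if "1 \<le> a" "a \<le> 6" for a using ev that d6 by auto
  have r: "(\<lambda>i. evec 6 i - evec 3 i) \<in> X"
    by (rule cl_sub[OF cl e e]) (insert d6, simp_all add: S)
  have x1: "(\<lambda>i. V 2 i + evec 4 i) \<in> X"
    by (rule cl_add[OF cl V e]) (insert d6, simp_all add: S)
  have x2: "(\<lambda>i. (V 2 i + evec 4 i) + (evec 6 i - evec 3 i)) \<in> X"
    by (rule cl_add[OF cl x1 r]) (insert d6, simp add: S, arith?)
  have x3: "(\<lambda>i. ((V 2 i + evec 4 i) + (evec 6 i - evec 3 i)) - evec 5 i) \<in> X"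
    by (rule cl_sub[OF cl x2 e]) (insert d6, simp_all add: S, arith?)
  have "(\<lambda>i. ((V 2 i + evec 4 i) + (evec 6 i - evec 3 i)) - evec 5 i) = V 6"
    by (auto simp: V_apply evec_def fun_eq_iff)
  thus ?thesis using x3 by simp
qed

lemma s26:
  assumes cl: "omega_closed d (sigma_perm d) X" and ev: "\<And>a. a \<in> {1..d} \<Longrightarrow> evec a \<in> X"
    and d8: "8 \<le> d" and V: "V 2 \<in> X"
  shows "V 6 \<in> X"
proof -
  let ?p = "sigma_perm d"
  have FE: "form d ?p (evec a) (evec b) = Omega ?p a b" if "a \<in> {1..d}" "b \<in> {1..d}" for a b
    using that form_evec_evec by blast
  have Om: "Omega ?p a b = (if a < b \<and> rbs d b < rbs d a then 1
     else if b < a \<and> rbs d a < rbs d b then -1 else 0)" if "a \<in> {1..d}" "b \<in> {1..d}" for a b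
    using Omega_s[OF d8 that] .
  have FV: "form d ?p (V 2) (evec c) = Omega ?p 2 c - Omega ?p 1 c" if "c \<in> {1..d}" for c
    using FV2[of d c] that d8 by simp
  note S = formsimps FV FE Om rbs_def
  have e: "evec a \<in> X" if "1 \<le> a" "a \<le> 8" for a using ev that d8 by auto
  have r1: "(\<lambda>i. evec 6 i + evec 8 i) \<in> X"
    by (rule cl_add[OF cl e e]) (insert d8, simp_all add: S)
  have r2: "(\<lambda>i. evec 5 i + evec 8 i) \<in> X"
    by (rule cl_add[OF cl e e]) (insert d8, simp_all add: S)
  have x1: "(\<lambda>i. V 2 i + evec 4 i) \<in> X"
    by (rule cl_add[OF cl V e]) (insert d8, simp_all add: S)
  have x2: "(\<lambda>i. (V 2 i + evec 4 i) + (evec 6 i + evec 8 i)) \<in> X"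
    by (rule cl_add[OF cl x1 r1]) (insert d8, simp add: S, arith?)
  have x3: "(\<lambda>i. ((V 2 i + evec 4 i) + (evec 6 i + evec 8 i)) - evec 3 i) \<in> X"
    by (rule cl_sub[OF cl x2 e]) (insert d8, simp_all add: S, arith?)
  have x4: "(\<lambda>i. (((V 2 i + evec 4 i) + (evec 6 i + evec 8 i)) - evec 3 i) - (evec 5 i + evec 8 i)) \<in> X"
    by (rule cl_sub[OF cl x3 r2]) (insert d8, simp add: S, arith?)
  have "(\<lambda>i. (((V 2 i + evec 4 i) + (evec 6 i + evec 8 i)) - evec 3 i) - (evec 5 i + evec 8 i)) = V 6"
    by (auto simp: V_apply evec_def fun_eq_iff)
  thus ?thesis using x4 by simp
qed

lemma s610:
  assumes cl: "omega_closed d (sigma_perm d) X" and ev: "\<And>a. a \<in> {1..d} \<Longrightarrow> evec a \<in> X"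
    and d10: "10 \<le> d" and V: "V 6 \<in> X"
  shows "V 10 \<in> X"
proof -
  let ?p = "sigma_perm d"
  have d8: "8 \<le> d" using d10 by simp
  have FE: "form d ?p (evec a) (evec b) = Omega ?p a b" if "a \<in> {1..d}" "b \<in> {1..d}" for a b
    using that form_evec_evec by blast
  have Om: "Omega ?p a b = (if a < b \<and> rbs d b < rbs d a then 1
     else if b < a \<and> rbs d a < rbs d b then -1 else 0)" if "a \<in> {1..d}" "b \<in> {1..d}" for a b
    using Omega_s[OF d8 that] .
  have FV: "form d ?p (V 6) (evec c) = Omega ?p 2 c - Omega ?p 1 c + Omega ?p 4 c - Omega ?p 3 c
     + Omega ?p 6 c - Omega ?p 5 c" if "c \<in> {1..d}" for c
    using FV6[of d c] that d10 by simp
  note S = formsimps FV FE Om rbs_def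
  have e: "evec a \<in> X" if "1 \<le> a" "a \<le> 10" for a using ev that d10 by auto
  have r1: "(\<lambda>i. evec 3 i + evec 8 i) \<in> X"
    by (rule cl_add[OF cl e e]) (insert d10, simp_all add: S)
  have r2: "(\<lambda>i. evec 5 i + evec 9 i) \<in> X"
    by (rule cl_add[OF cl e e]) (insert d10, simp_all add: S)
  have r3: "(\<lambda>i. evec 10 i - evec 3 i) \<in> X"
    by (rule cl_sub[OF cl e e]) (insert d10, simp_all add: S)
  have x1: "(\<lambda>i. V 6 i + evec 5 i) \<in> X"
    by (rule cl_add[OF cl V e]) (insert d10, simp_all add: S, arith?)
  have x2: "(\<lambda>i. (V 6 i + evec 5 i) + (evec 3 i + evec 8 i)) \<in> X"
    by (rule cl_add[OF cl x1 r1]) (insert d10, simp add: S, arith?)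
  have x3: "(\<lambda>i. ((V 6 i + evec 5 i) + (evec 3 i + evec 8 i)) - (evec 5 i + evec 9 i)) \<in> X"
    by (rule cl_sub[OF cl x2 r2]) (insert d10, simp add: S, arith?)
  have x4: "(\<lambda>i. (((V 6 i + evec 5 i) + (evec 3 i + evec 8 i)) - (evec 5 i + evec 9 i))
      + (evec 10 i - evec 3 i)) \<in> X"
    by (rule cl_add[OF cl x3 r3]) (insert d10, simp add: S, arith?)
  have x5: "(\<lambda>i. ((((V 6 i + evec 5 i) + (evec 3 i + evec 8 i)) - (evec 5 i + evec 9 i))
      + (evec 10 i - evec 3 i)) - evec 7 i) \<in> X"
    by (rule cl_sub[OF cl x4 e]) (insert d10, simp_all add: S, arith?)
  have "(\<lambda>i. ((((V 6 i + evec 5 i) + (evec 3 i + evec 8 i)) - (evec 5 i + evec 9 i))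
      + (evec 10 i - evec 3 i)) - evec 7 i) = V 10"
    by (auto simp: V_apply evec_def fun_eq_iff)
  thus ?thesis using x5 by simp
qed


lemma tau_all:
  assumes cl: "omega_closed d (tau_perm d) X" and ev: "\<And>a. a \<in> {1..d} \<Longrightarrow> evec a \<in> X"
    and d6: "6 \<le> d"
  shows "4 * k + 2 \<le> d \<Longrightarrow> V (4 * k + 2) \<in> X"
proof (induct k)
  case 0
  have "Omega (tau_perm d) 2 1 = -1" using Omega_t[OF d6, of 2 1] d6 by (simp add: rbt_def)
  hence "V 2 \<in> X" using base2[OF cl ev] d6 by simp
  thus ?case by (simp only: mult_0_right add_0)
next
  case (Suc k)
  hence IH: "V (4 * k + 2) \<in> X" by simp
  show ?case
  proof (cases "k = 0")
    case True
    thus ?thesis using t26[OF cl ev d6] IH by (simp add: numeral_2_eq_2)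
  next
    case False
    have "V ((4 * k + 2) + 4) \<in> X"
      by (rule step_t[OF cl ev d6 _ _ _ IH]) (use False Suc.prems in auto)
    thus ?thesis by (simp add: algebra_simps)
  qed
qed

lemma sigma_all:
  assumes cl: "omega_closed d (sigma_perm d) X" and ev: "\<And>a. a \<in> {1..d} \<Longrightarrow> evec a \<in> X"
    and d8: "8 \<le> d"
  shows "4 * k + 2 \<le> d \<Longrightarrow> V (4 * k + 2) \<in> X"
proof (induct k)
  case 0
  have "Omega (sigma_perm d) 2 1 = -1" using Omega_s[OF d8, of 2 1] d8 by (simp add: rbs_def)
  hence "V 2 \<in> X" using base2[OF cl ev] d8 by simp
  thus ?case by (simp only: mult_0_right add_0)
next
  case (Suc k)
  hence IH: "V (4 * k + 2) \<in> X" by simp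
  show ?case
  proof (cases "k \<le> 1")
    case True
    hence "k = 0 \<or> k = 1" by auto
    thus ?thesis
    proof
      assume "k = 0" thus ?thesis using s26[OF cl ev d8] IH by (simp add: numeral_2_eq_2)
    next
      assume "k = 1" thus ?thesis using s610[OF cl ev] IH Suc.prems by simp
    qed
  next
    case False
    have "V ((4 * k + 2) + 4) \<in> X"
      by (rule step_s[OF cl ev d8 _ _ _ IH]) (use False Suc.prems in auto)
    thus ?thesis by (simp add: algebra_simps)
  qed
qed

theorem lemma4p2:
  fixes d \<beta> :: nat and p :: perm_rows
  assumes "(p = tau_perm d \<and> 6 \<le> d) \<or> (p = sigma_perm d \<and> 8 \<le> d)"
    and "\<beta> \<le> d" and "\<beta> mod 4 = 2"
  shows "(\<lambda>i. \<Sum>a\<in>{1..\<beta>}. (-1) ^ a * evec a i) \<in> omega_closure d p (evec ` {1..d})"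
proof -
  have "\<beta> = \<beta> div 4 * 4 + \<beta> mod 4" by simp
  hence b: "\<beta> = 4 * (\<beta> div 4) + 2" using assms(3) by linarith
  have "V \<beta> \<in> X" if X: "evec ` {1..d} \<subseteq> X" "omega_closed d p X" for X
  proof -
    have ev: "\<And>a. a \<in> {1..d} \<Longrightarrow> evec a \<in> X" using X by auto
    show ?thesis using assms(1)
    proof
      assume h: "p = tau_perm d \<and> 6 \<le> d"
      show ?thesis using tau_all[of d X "\<beta> div 4"] h X ev b assms(2) by auto
    next
      assume h: "p = sigma_perm d \<and> 8 \<le> d"
      show ?thesis using sigma_all[of d X "\<beta> div 4"] h X ev b assms(2) by auto
    qed
  qed
  thus ?thesis unfolding omega_closure_def V_def by blast
qed

end
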